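(* Let $(\mathcal{P},d)$ be a 1-2-metric and consider the greedy-routing network creation game on it with edge price $\alpha>0$. (i) If $\alpha<\tfrac12$, the Maximum Domination Set Graph is the unique Nash equilibrium. (ii) If $\alpha=\tfrac12$, the Greedy Equilibria are exactly the Domination Set Graphs, and the Nash equilibria are exactly the Domination Set Graphs in which $W_2^+(u)=\emptyset$ for every node $u$ (no node builds an edge to a node it reaches via a path of two 1-edges). (iii) If $\alpha>\tfrac12$, every Minimum Domination Set Graph is a Greedy Equilibrium.
   Context: A 1-2-metric is a finite metric space $(\mathcal{P},d)$ with $d(u,v)\in\{1,2\}$ for all distinct $u,v$; arcs of length 1 are 1-edges, of length 2 are 2-edges. Game: agents are the points of $\mathcal{P}$; agent $u$'s strategy is $S_u\subseteq\mathcal{P}\setminus\{u\}$; a profile defines the directed network with arcs $(u,v)$, $v\in S_u$, of length $d(u,v)$; networks are identified with profiles. A greedy path from $u$ to $v$ is a directed path $u=x_1,\dots,x_j=v$ of arcs with $d(x_i,v)>d(x_{i+1},v)$ for all $i$. $\mathrm{stretch}(u,v)$ is the minimum length of a greedy path from $u$ to $v$ divided by $d(u,v)$, or a fixed sufficiently large penalty constant $Z$ if none exists. Cost: $c_u=\sum_{v\ne u}\mathrm{stretch}(u,v)+\alpha|S_u|$. Nash equilibrium: no agent can strictly decrease its cost by changing its strategy. Greedy Equilibrium: no agent can strictly decrease its cost by adding one element to, deleting one element from, or swapping one element of its strategy. Notation for a network $G$ and node $u$: $N(u)$ = out-neighbours of $u$; $W_2(u)=\{v\in N(u):d(u,v)=2\}$;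 $W_{1\to1}(u)$ = nodes $w\ne u$ with some $v$ such that $d(u,v)=d(v,w)=1$ and $(u,v),(v,w)$ are arcs; $W_2^+(u)=W_2(u)\cap W_{1\to1}(u)$. $G^1_{-u}$ is the directed graph on $\mathcal{P}\setminus\{u\}$ with arc $(v,w)$ whenever $d(v,w)=1$. A vertex set $D$ of a directed graph $H$ is dominating if every vertex outside $D$ has an in-neighbour in $D$. A Domination Set Graph (DSG) is a network $G$ such that (i) $G$ contains every arc $(v,w)$ with $d(v,w)=1$; (ii) for every $u$, $N(u)$ is dominating in $G^1_{-u}$; (iii) for every $u$ there is no $N'\subseteq\mathcal{P}\setminus\{u\}$ obtained from $N(u)$ by deleting one element or replacing one element by another, such that $N'$ contains all $v$ with $d(u,v)=1$, $N'$ is dominating in $G^1_{-u}$, and $|\{v\in N':d(u,v)=2\}\cap W_{1\to1}(u)|<|W_2^+(u)|$. A Minimum Domination Set Graph (MinDSG) is a DSG in which for every $u$, $|W_2(u)|$ is minimum among all out-neighbourhoods $N'\subseteq\mathcal{P}\setminus\{u\}$ that contain all $v$ with $d(u,v)=1$ and are dominating in $G^1_{-u}$. The Maximum Domination Set Graph (MaxDSG) is the network containing every arc $(u,w)$, $u\ne w$, except the 2-edges $(u,w)$ for which some $v$ satisfies $d(u,v)=d(v,w)=1$. *)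

theory Defs
  imports Complex_Main
begin

definition one_two_metric :: "'a set \<Rightarrow> ('a \<Rightarrow> 'a \<Rightarrow> nat) \<Rightarrow> bool" where
  "one_two_metric P d \<longleftrightarrow> finite P \<and>
     (\<forall>u\<in>P. d u u = 0) \<and>
     (\<forall>u\<in>P. \<forall>v\<in>P. d u v = d v u) \<and>
     (\<forall>u\<in>P. \<forall>v\<in>P. u \<noteq> v \<longrightarrow> d u v \<in> {1, 2})"

text \<open>A strategy profile (= network): agent u buys arcs to the nodes in S u.\<close>
definition valid_profile :: "'a set \<Rightarrow> ('a \<Rightarrow> 'a set) \<Rightarrow> bool" where
  "valid_profile P S \<longleftrightarrow> (\<forall>u\<in>P. S u \<subseteq> P - {u})"

definition greedy_path :: "('a \<Rightarrow> 'a \<Rightarrow> nat) \<Rightarrow> ('a \<Rightarrow> 'a set) \<Rightarrow> 'a \<Rightarrow> 'a \<Rightarrow> 'a list \<Rightarrow> bool" where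
  "greedy_path d S u v xs \<longleftrightarrow> xs \<noteq> [] \<and> hd xs = u \<and> last xs = v \<and>
     (\<forall>i. Suc i < length xs \<longrightarrow> xs ! Suc i \<in> S (xs ! i) \<and> d (xs ! i) v > d (xs ! Suc i) v)"

definition path_length :: "('a \<Rightarrow> 'a \<Rightarrow> nat) \<Rightarrow> 'a list \<Rightarrow> nat" where
  "path_length d xs = (\<Sum>i<length xs - 1. d (xs ! i) (xs ! Suc i))"

definition stretch :: "real \<Rightarrow> ('a \<Rightarrow> 'a \<Rightarrow> nat) \<Rightarrow> ('a \<Rightarrow> 'a set) \<Rightarrow> 'a \<Rightarrow> 'a \<Rightarrow> real" where
  "stretch Z d S u v =
     (if \<exists>xs. greedy_path d S u v xs
      then real (LEAST l. \<exists>xs. greedy_path d S u v xs \<and> path_length d xs = l) / real (d u v)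
      else Z)"

definition cost :: "'a set \<Rightarrow> ('a \<Rightarrow> 'a \<Rightarrow> nat) \<Rightarrow> real \<Rightarrow> real \<Rightarrow> ('a \<Rightarrow> 'a set) \<Rightarrow> 'a \<Rightarrow> real" where
  "cost P d Z \<alpha> S u = (\<Sum>v\<in>P - {u}. stretch Z d S u v) + \<alpha> * real (card (S u))"

definition nash_eq :: "'a set \<Rightarrow> ('a \<Rightarrow> 'a \<Rightarrow> nat) \<Rightarrow> real \<Rightarrow> real \<Rightarrow> ('a \<Rightarrow> 'a set) \<Rightarrow> bool" where
  "nash_eq P d Z \<alpha> S \<longleftrightarrow> valid_profile P S \<and>
     (\<forall>u\<in>P. \<forall>S'. S' \<subseteq> P - {u} \<longrightarrow> cost P d Z \<alpha> S u \<le> cost P d Z \<alpha> (S(u := S')) u)"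

definition greedy_moves :: "'a set \<Rightarrow> 'a \<Rightarrow> 'a set \<Rightarrow> 'a set set" where
  "greedy_moves P u A =
     {A \<union> {y} | y. y \<in> P - {u} - A} \<union>
     {A - {x} | x. x \<in> A} \<union>
     {(A - {x}) \<union> {y} | x y. x \<in> A \<and> y \<in> P - {u} - A}"

definition greedy_eq :: "'a set \<Rightarrow> ('a \<Rightarrow> 'a \<Rightarrow> nat) \<Rightarrow> real \<Rightarrow> real \<Rightarrow> ('a \<Rightarrow> 'a set) \<Rightarrow> bool" where
  "greedy_eq P d Z \<alpha> S \<longleftrightarrow> valid_profile P S \<and>
     (\<forall>u\<in>P. \<forall>S'\<in>greedy_moves P u (S u). cost P d Z \<alpha> S u \<le> cost P d Z \<alpha> (S(u := S')) u)"

definition W2 :: "('a \<Rightarrow> 'a \<Rightarrow> nat) \<Rightarrow> ('a \<Rightarrow> 'a set) \<Rightarrow> 'a \<Rightarrow> 'a set" where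
  "W2 d S u = {v \<in> S u. d u v = 2}"

definition W11 :: "'a set \<Rightarrow> ('a \<Rightarrow> 'a \<Rightarrow> nat) \<Rightarrow> ('a \<Rightarrow> 'a set) \<Rightarrow> 'a \<Rightarrow> 'a set" where
  "W11 P d S u = {w \<in> P. w \<noteq> u \<and> (\<exists>v\<in>P. d u v = 1 \<and> d v w = 1 \<and> v \<in> S u \<and> w \<in> S v)}"

definition W2plus :: "'a set \<Rightarrow> ('a \<Rightarrow> 'a \<Rightarrow> nat) \<Rightarrow> ('a \<Rightarrow> 'a set) \<Rightarrow> 'a \<Rightarrow> 'a set" where
  "W2plus P d S u = W2 d S u \<inter> W11 P d S u"

text \<open>D is dominating in G^1_{-u} (vertex set P - {u}, arcs = 1-edges).\<close>
definition dominating1 :: "'a set \<Rightarrow> ('a \<Rightarrow> 'a \<Rightarrow> nat) \<Rightarrow> 'a \<Rightarrow> 'a set \<Rightarrow> bool" where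
  "dominating1 P d u D \<longleftrightarrow> D \<subseteq> P - {u} \<and>
     (\<forall>w\<in>P - {u}. w \<notin> D \<longrightarrow> (\<exists>v\<in>D. d v w = 1))"

definition DSG :: "'a set \<Rightarrow> ('a \<Rightarrow> 'a \<Rightarrow> nat) \<Rightarrow> ('a \<Rightarrow> 'a set) \<Rightarrow> bool" where
  "DSG P d S \<longleftrightarrow> valid_profile P S \<and>
     (\<forall>v\<in>P. \<forall>w\<in>P. v \<noteq> w \<longrightarrow> d v w = 1 \<longrightarrow> w \<in> S v) \<and>
     (\<forall>u\<in>P. dominating1 P d u (S u)) \<and>
     (\<forall>u\<in>P. \<not> (\<exists>N'.
        (N' \<in> {S u - {x} | x. x \<in> S u} \<or>
         N' \<in> {(S u - {x}) \<union> {y} | x y. x \<in> S u \<and> y \<in> P - {u} - S u}) \<and>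
        {v \<in> P. v \<noteq> u \<and> d u v = 1} \<subseteq> N' \<and>
        dominating1 P d u N' \<and>
        card ({v \<in> N'. d u v = 2} \<inter> W11 P d S u) < card (W2plus P d S u)))"

definition MinDSG :: "'a set \<Rightarrow> ('a \<Rightarrow> 'a \<Rightarrow> nat) \<Rightarrow> ('a \<Rightarrow> 'a set) \<Rightarrow> bool" where
  "MinDSG P d S \<longleftrightarrow> DSG P d S \<and>
     (\<forall>u\<in>P. \<forall>N'. N' \<subseteq> P - {u} \<longrightarrow> {v \<in> P. v \<noteq> u \<and> d u v = 1} \<subseteq> N' \<longrightarrow>
        dominating1 P d u N' \<longrightarrow> card (W2 d S u) \<le> card {v \<in> N'. d u v = 2})"

definition MaxDSG :: "'a set \<Rightarrow> ('a \<Rightarrow> 'a \<Rightarrow> nat) \<Rightarrow> 'a \<Rightarrow> 'a set" where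
  "MaxDSG P d u = {w \<in> P. w \<noteq> u \<and> \<not> (d u w = 2 \<and> (\<exists>v\<in>P. d u v = 1 \<and> d v w = 1))}"

end

theory Submission
  imports Defs
begin

lemma gp_bound:
  assumes gp: "greedy_path d T u v xs"
  shows "i < length xs \<Longrightarrow> d (xs ! i) v + i \<le> d u v"
proof (induction i)
  case 0
  then show ?case using gp by (auto simp: greedy_path_def hd_conv_nth)
next
  case (Suc i)
  then have "d (xs ! i) v > d (xs ! Suc i) v" using gp by (auto simp: greedy_path_def)
  then show ?case using Suc by simp
qed

lemma d12:
  assumes "one_two_metric P d" "u \<in> P" "x \<in> P" "x \<noteq> u"
  shows "d u x = 1 \<or> d u x = 2"
  using assms by (auto simp: one_two_metric_def)

lemma d12T:
  assumes "one_two_metric P d" "u \<in> P" "T u \<subseteq> P - {u}" "x \<in> T u"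
  shows "d u x = 1 \<or> d u x = 2"
  using d12[of P d u x] assms by auto

lemma gp_char:
  assumes m: "one_two_metric P d" and u: "u \<in> P" and v: "v \<in> P" and uv: "u \<noteq> v"
    and Tu: "T u \<subseteq> P - {u}"
  shows "greedy_path d T u v xs \<longleftrightarrow> (xs = [u,v] \<and> v \<in> T u) \<or>
     (\<exists>x. xs = [u,x,v] \<and> x \<in> T u \<and> v \<in> T x \<and> d u v = 2 \<and> d x v = 1)"
proof
  assume gp: "greedy_path d T u v xs"
  have duv: "d u v \<in> {1,2}" "d v v = 0" using m u v uv by (auto simp: one_two_metric_def)
  have ne: "xs \<noteq> []" and h: "hd xs = u" and l: "last xs = v" using gp by (auto simp: greedy_path_def)
  have "d (xs ! (length xs - 1)) v + (length xs - 1) \<le> d u v"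
    using gp_bound[OF gp, of "length xs - 1"] ne by simp
  moreover have "xs ! (length xs - 1) = v" using l ne by (simp add: last_conv_nth)
  ultimately have L3: "length xs \<le> 3" using duv by auto
  have L2: "length xs \<ge> 2"
  proof (rule ccontr)
    assume "\<not> 2 \<le> length xs"
    then have "length xs = 1" using ne by (cases xs) (auto simp: Suc_le_eq)
    then have "hd xs = last xs" by (cases xs) auto
    then show False using h l uv by simp
  qed
  have G: "\<And>i. Suc i < length xs \<Longrightarrow> xs ! Suc i \<in> T (xs ! i) \<and> d (xs ! i) v > d (xs ! Suc i) v"
    using gp by (auto simp: greedy_path_def)
  show "(xs = [u,v] \<and> v \<in> T u) \<or>
     (\<exists>x. xs = [u,x,v] \<and> x \<in> T u \<and> v \<in> T x \<and> d u v = 2 \<and> d x v = 1)"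
  proof (cases "length xs = 2")
    case True
    then obtain a b where xs: "xs = [a,b]"
      by (metis (no_types, lifting) One_nat_def Suc_1 length_0_conv length_Suc_conv)
    then show ?thesis using h l G[of 0] by auto
  next
    case False
    then have "length xs = 3" using L2 L3 by simp
    then obtain a b c where xs: "xs = [a,b,c]"
      by (metis (no_types, lifting) length_0_conv length_Suc_conv numeral_3_eq_3)
    then have "a = u" "c = v" using h l by auto
    moreover have "b \<in> T a" "d a v > d b v" "c \<in> T b" "d b v > d c v"
      using G[of 0] G[of 1] xs by auto
    ultimately show ?thesis using xs duv by auto
  qed
next
  assume "(xs = [u,v] \<and> v \<in> T u) \<or>
     (\<exists>x. xs = [u,x,v] \<and> x \<in> T u \<and> v \<in> T x \<and> d u v = 2 \<and> d x v = 1)"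
  moreover have duv: "d u v \<in> {1,2}" "d v v = 0" using m u v uv by (auto simp: one_two_metric_def)
  ultimately show "greedy_path d T u v xs"
    unfolding greedy_path_def
    by (auto simp: less_Suc_eq nth_Cons split: nat.splits)
qed

lemma pl2: "path_length d [a,b] = d a b" by (simp add: path_length_def)
lemma pl3: "path_length d [a,b,c] = d a b + d b c"
  by (simp add: path_length_def numeral_2_eq_2)

lemma haspath:
  assumes m: "one_two_metric P d" and u: "u \<in> P" and v: "v \<in> P" and uv: "u \<noteq> v"
    and Tu: "T u \<subseteq> P - {u}"
  shows "(\<exists>xs. greedy_path d T u v xs) \<longleftrightarrow> v \<in> T u \<or> (d u v = 2 \<and> (\<exists>x\<in>T u. v \<in> T x \<and> d x v = 1))"
  using gp_char[where T=T, OF assms] by blast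

lemma gp_len_ge:
  assumes m: "one_two_metric P d" and u: "u \<in> P" and v: "v \<in> P" and uv: "u \<noteq> v"
    and Tu: "T u \<subseteq> P - {u}" and gp: "greedy_path d T u v xs"
  shows "path_length d xs \<ge> d u v"
proof -
  have "(xs = [u,v] \<and> v \<in> T u) \<or>
     (\<exists>x. xs = [u,x,v] \<and> x \<in> T u \<and> v \<in> T x \<and> d u v = 2 \<and> d x v = 1)"
    using gp_char[where T=T, OF m u v uv Tu] gp by blast
  then show ?thesis
  proof
    assume "xs = [u,v] \<and> v \<in> T u" then show ?thesis by (simp add: pl2)
  next
    assume "\<exists>x. xs = [u,x,v] \<and> x \<in> T u \<and> v \<in> T x \<and> d u v = 2 \<and> d x v = 1"
    then obtain x where x: "xs = [u,x,v]" "x \<in> T u" "d u v = 2" "d x v = 1" by blast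
    then have "d u x = 1 \<or> d u x = 2" using d12T[of P d u T x] m Tu u by auto
    then show ?thesis using x by (auto simp: pl3)
  qed
qed

lemma stretch_exact:
  assumes gp: "greedy_path d T u v xs" and pl: "path_length d xs = k"
    and ge: "\<And>ys. greedy_path d T u v ys \<Longrightarrow> path_length d ys \<ge> k"
  shows "stretch Z d T u v = real k / real (d u v)"
proof -
  have "(LEAST l. \<exists>xs. greedy_path d T u v xs \<and> path_length d xs = l) = k"
    by (rule Least_equality) (use gp pl ge in auto)
  then show ?thesis using gp by (auto simp: stretch_def)
qed

lemma stretch_one:
  assumes m: "one_two_metric P d" and u: "u \<in> P" and v: "v \<in> P" and uv: "u \<noteq> v"
    and Tu: "T u \<subseteq> P - {u}"
    and c: "v \<in> T u \<or> (\<exists>x\<in>T u. d u x = 1 \<and> d x v = 1 \<and> v \<in> T x \<and> d u v = 2)"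
  shows "stretch Z d T u v = 1"
proof -
  have duv: "d u v \<in> {1,2}" using m u v uv by (auto simp: one_two_metric_def)
  obtain xs where gp: "greedy_path d T u v xs" and pl: "path_length d xs = d u v"
  proof (cases "v \<in> T u")
    case True
    then show ?thesis using that gp_char[where T=T, OF m u v uv Tu, of "[u,v]"] by (simp add: pl2)
  next
    case False
    then obtain x where "x\<in>T u" "d u x = 1" "d x v = 1" "v \<in> T x" "d u v = 2" using c by blast
    then show ?thesis using that gp_char[where T=T, OF m u v uv Tu, of "[u,x,v]"] by (auto simp: pl3)
  qed
  have "stretch Z d T u v = real (d u v) / real (d u v)"
    by (rule stretch_exact[OF gp pl]) (use gp_len_ge[where T=T, OF m u v uv Tu] in auto)
  then show ?thesis using duv by auto
qed

lemma stretch_32: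
  assumes m: "one_two_metric P d" and u: "u \<in> P" and v: "v \<in> P" and uv: "u \<noteq> v"
    and Tu: "T u \<subseteq> P - {u}" and nd: "v \<notin> T u" and d2: "d u v = 2"
    and x: "x \<in> T u" "v \<in> T x" "d x v = 1"
    and no: "\<not> (\<exists>x\<in>T u. d u x = 1 \<and> d x v = 1 \<and> v \<in> T x)"
  shows "stretch Z d T u v = 3/2"
proof -
  have dux: "d u x = 2" using x no d12T[of P d u T x] m u Tu by auto
  have gp: "greedy_path d T u v [u,x,v]" using gp_char[where T=T, OF m u v uv Tu, of "[u,x,v]"] x d2 by auto
  have all: "path_length d ys = 3" if gpy: "greedy_path d T u v ys" for ys
  proof -
    obtain y where y: "ys = [u,y,v]" "y \<in> T u" "v \<in> T y" "d y v = 1"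
      using gp_char[where T=T, OF m u v uv Tu, of ys] gpy nd by auto
    then have "d u y = 2" using no d12T[of P d u T y] m u Tu by auto
    then show ?thesis using y by (simp add: pl3)
  qed
  have "stretch Z d T u v = real 3 / real (d u v)"
    by (rule stretch_exact[OF gp]) (use all gp in auto)
  then show ?thesis using d2 by simp
qed

lemma stretch_nopath: "\<not> (\<exists>xs. greedy_path d T u v xs) \<Longrightarrow> stretch Z d T u v = Z"
  by (simp add: stretch_def)

lemma stretch_bounds:
  assumes m: "one_two_metric P d" and u: "u \<in> P" and v: "v \<in> P" and uv: "u \<noteq> v"
    and Tu: "T u \<subseteq> P - {u}" and p: "\<exists>xs. greedy_path d T u v xs"
  shows "0 \<le> stretch Z d T u v \<and> stretch Z d T u v \<le> 3/2"
proof (cases "v \<in> T u \<or> (\<exists>x\<in>T u. d u x = 1 \<and> d x v = 1 \<and> v \<in> T x \<and> d u v = 2)")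
  case True
  then show ?thesis using stretch_one[where T=T, OF m u v uv Tu] by simp
next
  case False
  then obtain x where "x \<in> T u" "v \<in> T x" "d x v = 1" "d u v = 2" "v \<notin> T u"
    using haspath[where T=T, OF m u v uv Tu] p by auto
  then have "stretch Z d T u v = 3/2" using stretch_32[where T=T, OF m u v uv Tu] False by auto
  then show ?thesis by simp
qed

definition badset where
  "badset P d T u = {v \<in> P - {u}. \<not> (\<exists>xs. greedy_path d T u v xs)}"
definition Os where "Os P d u = {v \<in> P. v \<noteq> u \<and> d u v = 1}"
definition As where "As P d u = {v \<in> P. v \<noteq> u \<and> d u v = 2}"
definition Ms where "Ms P d u = {w \<in> P. \<exists>v\<in>P. d u v = 1 \<and> d v w = 1}"
definition all1 where "all1 P d T \<longleftrightarrow> (\<forall>x\<in>P. \<forall>w\<in>P. x \<noteq> w \<longrightarrow> d x w = 1 \<longrightarrow> w \<in> T x)"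

lemma fin: "one_two_metric P d \<Longrightarrow> finite P" by (simp add: one_two_metric_def)

lemma cost_split:
  assumes m: "one_two_metric P d"
  shows "cost P d Z \<alpha> T u = Z * card (badset P d T u)
     + (\<Sum>v\<in>(P - {u}) - badset P d T u. stretch Z d T u v) + \<alpha> * card (T u)"
proof -
  have f: "finite (P - {u})" using fin[OF m] by simp
  have sub: "badset P d T u \<subseteq> P - {u}" by (auto simp: badset_def)
  have "(\<Sum>v\<in>P - {u}. stretch Z d T u v) = (\<Sum>v\<in>(P - {u}) - badset P d T u. stretch Z d T u v)
     + (\<Sum>v\<in>badset P d T u. stretch Z d T u v)"
    using sum.subset_diff[OF sub f] by simp
  also have "(\<Sum>v\<in>badset P d T u. stretch Z d T u v) = (\<Sum>v\<in>badset P d T u. Z)"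
    by (rule sum.cong) (auto simp: badset_def stretch_def)
  finally show ?thesis by (simp add: cost_def algebra_simps)
qed

lemma KZ:
  fixes Z \<alpha> :: real
  assumes m: "one_two_metric P d" and u: "u \<in> P"
    and Ta: "Ta u \<subseteq> P - {u}" and a: "\<alpha> \<ge> 0" and Z: "Z \<ge> (2 + \<alpha>) * (card P + 1)"
    and lt: "card (badset P d Ta u) < card (badset P d Tb u)"
  shows "cost P d Z \<alpha> Ta u < cost P d Z \<alpha> Tb u"
proof -
  let ?n = "card P"
  have f: "finite P" using fin[OF m] .
  have e: "(2 + \<alpha>) * (card P + 1) = 2 * real ?n + \<alpha> * ?n + 2 + \<alpha>" by (simp add: algebra_simps)
  have an: "\<alpha> * ?n \<ge> 0" using a by simp
  have Z0: "Z \<ge> 0" using Z a e an by linarith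
  have s1: "(\<Sum>v\<in>(P - {u}) - badset P d Ta u. stretch Z d Ta u v) \<le> (\<Sum>v\<in>(P - {u}) - badset P d Ta u. 3/2)"
    by (rule sum_mono) (use stretch_bounds[where T=Ta, OF m u _ _ Ta] in \<open>auto simp: badset_def\<close>)
  also have "\<dots> = 3/2 * card ((P - {u}) - badset P d Ta u)" by simp
  also have "\<dots> \<le> 3/2 * ?n"
    using card_mono[OF f, of "(P - {u}) - badset P d Ta u"] by auto
  finally have s1: "(\<Sum>v\<in>(P - {u}) - badset P d Ta u. stretch Z d Ta u v) \<le> 3/2 * ?n" .
  have s2: "(\<Sum>v\<in>(P - {u}) - badset P d Tb u. stretch Z d Tb u v) \<ge> 0"
  proof (rule sum_nonneg)
    fix v assume "v \<in> (P - {u}) - badset P d Tb u"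
    then show "0 \<le> stretch Z d Tb u v" using Z0
      by (auto simp: stretch_def intro!: divide_nonneg_nonneg)
  qed
  have c1: "real (card (Ta u)) \<le> ?n" using card_mono[OF f] Ta by auto
  have "cost P d Z \<alpha> Ta u \<le> Z * card (badset P d Ta u) + 3/2 * ?n + \<alpha> * ?n"
    using cost_split[OF m, of Z \<alpha> Ta u] s1 mult_left_mono[of "real (card (Ta u))" "real ?n" \<alpha>] c1 a by linarith
  also have "\<dots> < Z * card (badset P d Ta u) + Z"
    using Z a e an by linarith
  also have "\<dots> = Z * (card (badset P d Ta u) + 1)" by (simp add: algebra_simps)
  also have "\<dots> \<le> Z * card (badset P d Tb u)"
    using lt Z0 by (intro mult_left_mono) auto
  also have "\<dots> \<le> cost P d Z \<alpha> Tb u"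
    using cost_split[OF m, of Z \<alpha> Tb u] s2 a by simp
  finally show ?thesis .
qed

lemma gp_mono: "greedy_path d T u v xs \<Longrightarrow> (\<And>x. T x \<subseteq> T' x) \<Longrightarrow> greedy_path d T' u v xs"
  unfolding greedy_path_def by blast

lemma bad_mono: "(\<And>x. T x \<subseteq> T' x) \<Longrightarrow> badset P d T' u \<subseteq> badset P d T u"
proof
  fix v assume "(\<And>x. T x \<subseteq> T' x)" "v \<in> badset P d T' u"
  then show "v \<in> badset P d T u" unfolding badset_def using gp_mono[of d T u v _ T'] by auto
qed

lemma bad_add:
  assumes m: "one_two_metric P d" and u: "u \<in> P" and Tu: "T u \<subseteq> P - {u}"
    and w: "w \<in> badset P d T u"
  shows "card (badset P d (T(u := insert w (T u))) u) < card (badset P d T u)"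
proof -
  let ?T = "T(u := insert w (T u))"
  have wP: "w \<in> P" "w \<noteq> u" using w by (auto simp: badset_def)
  have Tu': "?T u \<subseteq> P - {u}" using Tu wP by auto
  have "\<exists>xs. greedy_path d ?T u w xs" using haspath[where T="?T", OF m u wP(1) _ Tu'] wP by auto
  then have "w \<notin> badset P d ?T u" by (auto simp: badset_def)
  moreover have "badset P d ?T u \<subseteq> badset P d T u" by (rule bad_mono) auto
  ultimately have "badset P d ?T u \<subset> badset P d T u" using w by blast
  moreover have "finite (badset P d T u)" using fin[OF m] by (auto simp: badset_def)
  ultimately show ?thesis by (rule psubset_card_mono[rotated])
qed

lemma bad_empty_imp:
  assumes m: "one_two_metric P d" and u: "u \<in> P" and Tu: "T u \<subseteq> P - {u}"
    and b: "badset P d T u = {}"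
  shows "Os P d u \<subseteq> T u" "dominating1 P d u (T u)"
proof -
  have p: "v \<in> T u \<or> (d u v = 2 \<and> (\<exists>x\<in>T u. v \<in> T x \<and> d x v = 1))"
    if v: "v \<in> P" "v \<noteq> u" for v
  proof -
    have "\<exists>xs. greedy_path d T u v xs" using b v by (auto simp: badset_def)
    then show ?thesis using haspath[where T=T, OF m u v(1) _ Tu] v by simp
  qed
  show "Os P d u \<subseteq> T u"
  proof
    fix v assume "v \<in> Os P d u"
    then show "v \<in> T u" using p[of v] by (auto simp: Os_def)
  qed
  show "dominating1 P d u (T u)" unfolding dominating1_def
  proof (intro conjI ballI impI)
    show "T u \<subseteq> P - {u}" by (rule Tu)
    fix w assume "w \<in> P - {u}" "w \<notin> T u"
    then show "\<exists>v\<in>T u. d v w = 1" using p[of w] by auto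
  qed
qed

lemma bad_empty_of:
  assumes m: "one_two_metric P d" and u: "u \<in> P" and Tu: "T u \<subseteq> P - {u}"
    and a1: "all1 P d T" and dom: "dominating1 P d u (T u)"
  shows "badset P d T u = {}"
proof -
  have "\<exists>xs. greedy_path d T u v xs" if v: "v \<in> P" "v \<noteq> u" for v
  proof (cases "v \<in> T u")
    case True
    then show ?thesis using haspath[where T=T, OF m u v(1) _ Tu] v by auto
  next
    case False
    then obtain x where x: "x \<in> T u" "d x v = 1" using dom v by (auto simp: dominating1_def)
    have xP: "x \<in> P" "x \<noteq> v" using x Tu m v by (auto simp: one_two_metric_def)
    have "d u v \<noteq> 1" using a1 False u v by (auto simp: all1_def)
    then have "d u v = 2" using d12[OF m u v(1)] v by auto
    moreover have "v \<in> T x" using a1 xP x v by (auto simp: all1_def)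
    ultimately show ?thesis using haspath[where T=T, OF m u v(1) _ Tu] v x by auto
  qed
  then show ?thesis by (auto simp: badset_def)
qed

lemma cost_formula:
  fixes Z \<alpha> :: real
  assumes m: "one_two_metric P d" and u: "u \<in> P" and Tu: "T u \<subseteq> P - {u}"
    and a1: "all1 P d T" and dom: "dominating1 P d u (T u)"
  shows "cost P d Z \<alpha> T u = card (P - {u}) + card (As P d u - T u - Ms P d u) / 2 + \<alpha> * card (T u)"
proof -
  let ?B = "As P d u - T u - Ms P d u"
  have dvv: "\<And>v. v \<in> P \<Longrightarrow> d v v = 0" using m by (auto simp: one_two_metric_def)
  have pt: "stretch Z d T u v = 1 + (if v \<in> ?B then 1/2 else 0)" if v: "v \<in> P - {u}" for v
  proof (cases "v \<in> T u")
    case True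
    then show ?thesis using stretch_one[where T=T, OF m u _ _ Tu] v by auto
  next
    case False
    have "d u v \<noteq> 1" using a1 False u v by (auto simp: all1_def)
    then have d2: "d u v = 2" using d12[OF m u, of v] v by auto
    obtain x where x: "x \<in> T u" "d x v = 1" using dom v False by (auto simp: dominating1_def)
    have xP: "x \<in> P" "x \<noteq> v" using x Tu v dvv by auto
    have xv: "v \<in> T x" using a1 xP x v by (auto simp: all1_def)
    show ?thesis
    proof (cases "v \<in> Ms P d u")
      case True
      then obtain y where y: "y \<in> P" "d u y = 1" "d y v = 1" by (auto simp: Ms_def)
      have "y \<noteq> u" "y \<noteq> v" using y dvv u v by auto
      then have "y \<in> T u" "v \<in> T y" using a1 y u v by (auto simp: all1_def)
      then have "stretch Z d T u v = 1"
        using stretch_one[where T=T, OF m u _ _ Tu, of v Z] v y d2 by auto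
      then show ?thesis using True by simp
    next
      case nM: False
      have no: "\<not> (\<exists>x\<in>T u. d u x = 1 \<and> d x v = 1 \<and> v \<in> T x)"
        using nM Tu v by (auto simp: Ms_def)
      have "stretch Z d T u v = 3/2"
        using stretch_32[where T=T, OF m u _ _ Tu False d2 x(1) xv x(2) no] v by auto
      moreover have "v \<in> ?B" using nM False d2 v by (auto simp: As_def)
      ultimately show ?thesis by simp
    qed
  qed
  have f: "finite (P - {u})" using fin[OF m] by simp
  have "(\<Sum>v\<in>P - {u}. stretch Z d T u v) = (\<Sum>v\<in>P - {u}. 1 + (if v \<in> ?B then 1/2 else 0))"
    by (rule sum.cong) (use pt in auto)
  also have "\<dots> = card (P - {u}) + (\<Sum>v\<in>P - {u}. (if v \<in> ?B then 1/2 else 0))"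
    by (simp add: sum.distrib)
  also have "(\<Sum>v\<in>P - {u}. (if v \<in> ?B then 1/2 else 0)) = (\<Sum>v\<in>{v\<in>P - {u}. v \<in> ?B}. (1/2::real))"
    by (rule sum.inter_filter[OF f, symmetric])
  also have "{v\<in>P - {u}. v \<in> ?B} = ?B" by (auto simp: As_def)
  finally show ?thesis by (simp add: cost_def)
qed

lemma card_ids:
  assumes m: "one_two_metric P d" and u: "u \<in> P" and N: "N \<subseteq> P - {u}" and O: "Os P d u \<subseteq> N"
  shows "card (As P d u - N - Ms P d u) + card (N \<inter> As P d u) = card (As P d u - Ms P d u) + card (N \<inter> As P d u \<inter> Ms P d u)"
    and "card N = card (Os P d u) + card (N \<inter> As P d u)"
proof -
  have f: "finite P" using fin[OF m] .
  have fA: "finite (As P d u)" using f by (auto simp: As_def)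
  have fN: "finite N" using N f finite_subset by blast
  have "As P d u - Ms P d u = (As P d u - N - Ms P d u) \<union> (N \<inter> As P d u - Ms P d u)" by blast
  then have 1: "card (As P d u - Ms P d u) = card (As P d u - N - Ms P d u) + card (N \<inter> As P d u - Ms P d u)"
    using fA by (simp add: card_Un_disjoint disjoint_iff)
  have "N \<inter> As P d u = (N \<inter> As P d u \<inter> Ms P d u) \<union> (N \<inter> As P d u - Ms P d u)" by blast
  then have 2: "card (N \<inter> As P d u) = card (N \<inter> As P d u \<inter> Ms P d u) + card (N \<inter> As P d u - Ms P d u)"
    using fA by (metis Diff_disjoint Int_Diff card_Un_disjoint finite_Diff finite_Int inf_commute)
  show "card (As P d u - N - Ms P d u) + card (N \<inter> As P d u) = card (As P d u - Ms P d u) + card (N \<inter> As P d u \<inter> Ms P d u)"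
    using 1 2 by simp
  have "N = Os P d u \<union> (N \<inter> As P d u)" using N O d12[OF m u] by (auto simp: Os_def As_def)
  moreover have "Os P d u \<inter> (N \<inter> As P d u) = {}" by (auto simp: Os_def As_def)
  ultimately show "card N = card (Os P d u) + card (N \<inter> As P d u)"
    using fN by (metis card_Un_disjoint finite_Un)
qed

lemma all1_upd: "all1 P d S \<Longrightarrow> Os P d u \<subseteq> N \<Longrightarrow> all1 P d (S(u := N))"
  by (auto simp: all1_def Os_def)

lemma cost_good:
  fixes Z \<alpha> :: real
  assumes m: "one_two_metric P d" and u: "u \<in> P" and N: "N \<subseteq> P - {u}" and a1: "all1 P d S"
    and O: "Os P d u \<subseteq> N" and dom: "dominating1 P d u N"
  shows "cost P d Z \<alpha> (S(u := N)) u = card (P - {u})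
     + (real (card (As P d u - Ms P d u)) + card (N \<inter> As P d u \<inter> Ms P d u) - card (N \<inter> As P d u)) / 2
     + \<alpha> * (real (card (Os P d u)) + card (N \<inter> As P d u))"
proof -
  have "cost P d Z \<alpha> (S(u := N)) u = card (P - {u}) + card (As P d u - N - Ms P d u) / 2 + \<alpha> * card N"
    using cost_formula[where T="S(u := N)", OF m u _ all1_upd[OF a1 O]] N dom by simp
  moreover have "real (card (As P d u - N - Ms P d u)) = real (card (As P d u - Ms P d u)) + card (N \<inter> As P d u \<inter> Ms P d u) - card (N \<inter> As P d u)"
    using card_ids(1)[OF m u N O] by (metis add_diff_cancel_right' of_nat_add)
  moreover have "real (card N) = card (Os P d u) + card (N \<inter> As P d u)"
    using card_ids(2)[OF m u N O] by simp
  ultimately show ?thesis by simp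
qed

lemma W11_eq:
  assumes m: "one_two_metric P d" and u: "u \<in> P" and a1: "all1 P d S"
  shows "W11 P d S u = Ms P d u - {u}"
proof -
  have dvv: "\<And>v. v \<in> P \<Longrightarrow> d v v = 0" using m by (auto simp: one_two_metric_def)
  show ?thesis
  proof
    show "W11 P d S u \<subseteq> Ms P d u - {u}" by (auto simp: W11_def Ms_def)
    show "Ms P d u - {u} \<subseteq> W11 P d S u"
    proof
      fix w assume w: "w \<in> Ms P d u - {u}"
      then obtain v where v: "v \<in> P" "d u v = 1" "d v w = 1" "w \<in> P" "w \<noteq> u" by (auto simp: Ms_def)
      have "v \<noteq> u" "v \<noteq> w" using v dvv u by auto
      then have "v \<in> S u" "w \<in> S v" using a1 v u by (auto simp: all1_def)
      then show "w \<in> W11 P d S u" using v by (auto simp: W11_def)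
    qed
  qed
qed

lemma W11_int:
  assumes m: "one_two_metric P d" and u: "u \<in> P" and a1: "all1 P d S" and N: "N \<subseteq> P - {u}"
  shows "{v \<in> N. d u v = 2} \<inter> W11 P d S u = N \<inter> As P d u \<inter> Ms P d u"
  using W11_eq[OF m u a1] N by (auto simp: As_def)

lemma W2plus_eq:
  assumes m: "one_two_metric P d" and u: "u \<in> P" and a1: "all1 P d S" and N: "S u \<subseteq> P - {u}"
  shows "W2plus P d S u = S u \<inter> As P d u \<inter> Ms P d u"
  using W11_int[OF m u a1 N] by (simp add: W2plus_def W2_def)

lemma W2_eq:
  assumes "S u \<subseteq> P - {u}"
  shows "W2 d S u = S u \<inter> As P d u"
  using assms by (auto simp: W2_def As_def)

lemma Nstar:
  assumes m: "one_two_metric P d" and u: "u \<in> P"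
  shows "MaxDSG P d u = Os P d u \<union> (As P d u - Ms P d u)"
    "Os P d u \<union> (As P d u - Ms P d u) \<subseteq> P - {u}"
    "dominating1 P d u (Os P d u \<union> (As P d u - Ms P d u))"
proof -
  have dvv: "\<And>v. v \<in> P \<Longrightarrow> d v v = 0" using m by (auto simp: one_two_metric_def)
  show "MaxDSG P d u = Os P d u \<union> (As P d u - Ms P d u)"
    using d12[OF m u] by (auto simp: MaxDSG_def Os_def As_def Ms_def)
  show sub: "Os P d u \<union> (As P d u - Ms P d u) \<subseteq> P - {u}" by (auto simp: Os_def As_def)
  show "dominating1 P d u (Os P d u \<union> (As P d u - Ms P d u))"
    unfolding dominating1_def
  proof (intro conjI ballI impI sub)
    fix w assume w: "w \<in> P - {u}" "w \<notin> Os P d u \<union> (As P d u - Ms P d u)"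
    then have "d u w = 2" using d12[OF m u, of w] by (auto simp: Os_def)
    then have "w \<in> Ms P d u" using w by (auto simp: As_def)
    then obtain v where v: "v \<in> P" "d u v = 1" "d v w = 1" by (auto simp: Ms_def)
    then have "v \<in> Os P d u" using dvv u by (auto simp: Os_def)
    then show "\<exists>v\<in>Os P d u \<union> (As P d u - Ms P d u). d v w = 1" using v by blast
  qed
qed

lemma bad0:
  fixes Z \<alpha> :: real
  assumes m: "one_two_metric P d" and u: "u \<in> P" and Su: "S u \<subseteq> P - {u}"
    and a: "\<alpha> \<ge> 0" and Z: "Z \<ge> (2 + \<alpha>) * (card P + 1)"
    and H: "\<And>w. w \<in> P - {u} - S u \<Longrightarrow> cost P d Z \<alpha> S u \<le> cost P d Z \<alpha> (S(u := S u \<union> {w})) u"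
  shows "badset P d S u = {}"
proof (rule ccontr)
  assume "badset P d S u \<noteq> {}"
  then obtain w where w: "w \<in> badset P d S u" by blast
  have wP: "w \<in> P" "w \<noteq> u" and np: "\<not> (\<exists>xs. greedy_path d S u w xs)"
    using w by (auto simp: badset_def)
  have wn: "w \<notin> S u"
  proof
    assume "w \<in> S u"
    then have "\<exists>xs. greedy_path d S u w xs" using haspath[where T=S, OF m u wP(1) _ Su] wP(2) by simp
    then show False using np by simp
  qed
  have lt: "card (badset P d (S(u := insert w (S u))) u) < card (badset P d S u)"
    by (rule bad_add[OF m u Su w])
  have T1: "(S(u := insert w (S u))) u \<subseteq> P - {u}" using Su wP by auto
  have "cost P d Z \<alpha> (S(u := insert w (S u))) u < cost P d Z \<alpha> S u"
    by (rule KZ[OF m u T1 a Z lt])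
  moreover have "w \<in> P - {u} - S u" using wP wn by simp
  moreover have "S u \<union> {w} = insert w (S u)" by simp
  ultimately show False using H[of w] by simp
qed

lemma all_good:
  assumes m: "one_two_metric P d" and v: "valid_profile P S"
    and b: "\<And>u. u \<in> P \<Longrightarrow> badset P d S u = {}"
  shows "all1 P d S" "\<And>u. u \<in> P \<Longrightarrow> dominating1 P d u (S u)"
proof -
  have Su: "\<And>u. u \<in> P \<Longrightarrow> S u \<subseteq> P - {u}" using v by (auto simp: valid_profile_def)
  show "all1 P d S" unfolding all1_def
  proof (intro ballI impI)
    fix x w assume "x \<in> P" "w \<in> P" "x \<noteq> w" "d x w = 1"
    then show "w \<in> S x" using bad_empty_imp(1)[where T=S, OF m _ Su b] by (auto simp: Os_def)
  qed
  show "\<And>u. u \<in> P \<Longrightarrow> dominating1 P d u (S u)"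
    using bad_empty_imp(2)[where T=S, OF m _ Su b] by blast
qed

lemma dev_cases:
  fixes Z \<alpha> :: real
  assumes m: "one_two_metric P d" and u: "u \<in> P" and Su: "S u \<subseteq> P - {u}" and a1: "all1 P d S"
    and dom: "dominating1 P d u (S u)" and S': "S' \<subseteq> P - {u}"
    and a: "\<alpha> \<ge> 0" and Z: "Z \<ge> (2 + \<alpha>) * (card P + 1)"
  shows "cost P d Z \<alpha> S u < cost P d Z \<alpha> (S(u := S')) u \<or> (Os P d u \<subseteq> S' \<and> dominating1 P d u S')"
proof (cases "badset P d (S(u := S')) u = {}")
  case True
  have "(S(u := S')) u \<subseteq> P - {u}" using S' by simp
  from bad_empty_imp[where T="S(u := S')", OF m u this True] show ?thesis by simp
next
  case False
  have b0: "badset P d S u = {}" by (rule bad_empty_of[where T=S, OF m u Su a1 dom])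
  have "finite (badset P d (S(u := S')) u)" using fin[OF m] by (auto simp: badset_def)
  then have "card (badset P d S u) < card (badset P d (S(u := S')) u)"
    using False b0 by (simp add: card_gt_0_iff)
  then have "cost P d Z \<alpha> S u < cost P d Z \<alpha> (S(u := S')) u"
    by (rule KZ[where Ta=S, OF m u Su a Z])
  then show ?thesis by blast
qed

lemma moves_sub: "A \<subseteq> P - {u} \<Longrightarrow> S' \<in> greedy_moves P u A \<Longrightarrow> S' \<subseteq> P - {u}"
  unfolding greedy_moves_def by auto

lemma m_mono:
  assumes m: "one_two_metric P d" and u: "u \<in> P" and D: "DSG P d S"
    and S': "S' \<in> greedy_moves P u (S u)" and O: "Os P d u \<subseteq> S'" and dom: "dominating1 P d u S'"
  shows "card (S u \<inter> As P d u \<inter> Ms P d u) \<le> card (S' \<inter> As P d u \<inter> Ms P d u)"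
proof -
  have v: "valid_profile P S" and a1: "all1 P d S"
    and iii: "\<not> (\<exists>N'.
        (N' \<in> {S u - {x} | x. x \<in> S u} \<or>
         N' \<in> {(S u - {x}) \<union> {y} | x y. x \<in> S u \<and> y \<in> P - {u} - S u}) \<and>
        {v \<in> P. v \<noteq> u \<and> d u v = 1} \<subseteq> N' \<and>
        dominating1 P d u N' \<and>
        card ({v \<in> N'. d u v = 2} \<inter> W11 P d S u) < card (W2plus P d S u))"
    using D u by (auto simp: DSG_def all1_def)
  have Su: "S u \<subseteq> P - {u}" using v u by (auto simp: valid_profile_def)
  have S'P: "S' \<subseteq> P - {u}" by (rule moves_sub[OF Su S'])
  have fA: "finite (As P d u)" using fin[OF m] by (auto simp: As_def)
  show ?thesis
  proof (cases "S' \<in> {S u \<union> {y} | y. y \<in> P - {u} - S u}")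
    case True
    then have "S u \<subseteq> S'" by auto
    then show ?thesis using fA by (intro card_mono) auto
  next
    case False
    then have mv: "S' \<in> {S u - {x} | x. x \<in> S u} \<or>
         S' \<in> {(S u - {x}) \<union> {y} | x y. x \<in> S u \<and> y \<in> P - {u} - S u}"
      using S' unfolding greedy_moves_def by blast
    have "{v \<in> P. v \<noteq> u \<and> d u v = 1} \<subseteq> S'" using O by (simp add: Os_def)
    then have "\<not> card ({v \<in> S'. d u v = 2} \<inter> W11 P d S u) < card (W2plus P d S u)"
      using iii mv dom by blast
    then show ?thesis using W11_int[OF m u a1 S'P] W2plus_eq[OF m u a1 Su] by simp
  qed
qed

lemma DSG_basic:
  assumes "DSG P d S"
  shows "valid_profile P S" "all1 P d S" "\<And>u. u \<in> P \<Longrightarrow> dominating1 P d u (S u)"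
  using assms by (auto simp: DSG_def all1_def)

lemma ineq3:
  fixes \<alpha> c A mm mm' k k' oo :: real
  assumes "0 \<le> (\<alpha> - 1 / 2) * (k' - k)" "mm \<le> mm'"
  shows "c + (A + mm - k) / 2 + \<alpha> * (oo + k) \<le> c + (A + mm' - k') / 2 + \<alpha> * (oo + k')"
proof -
  have e1: "(\<alpha> - 1/2) * (k' - k) = \<alpha> * k' - \<alpha> * k - k'/2 + k/2" by (simp add: field_simps)
  have e2: "\<alpha> * (oo + k) = \<alpha> * oo + \<alpha> * k" "\<alpha> * (oo + k') = \<alpha> * oo + \<alpha> * k'" by (simp_all add: algebra_simps)
  have "0 \<le> \<alpha> * k' - \<alpha> * k - k'/2 + k/2" using assms(1) e1 by simp
  then show ?thesis unfolding e2 using assms(2) by (simp add: field_simps)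
qed

lemma GE_gen:
  fixes Z \<alpha> :: real
  assumes m: "one_two_metric P d" and a: "\<alpha> \<ge> 1/2" and Z: "Z \<ge> (2 + \<alpha>) * (card P + 1)"
    and D: "DSG P d S" and K: "\<alpha> = 1/2 \<or> MinDSG P d S"
  shows "greedy_eq P d Z \<alpha> S"
proof -
  note b = DSG_basic[OF D]
  have a0: "\<alpha> \<ge> 0" using a by simp
  show ?thesis unfolding greedy_eq_def
  proof (intro conjI ballI b(1))
    fix u S' assume u: "u \<in> P" and S': "S' \<in> greedy_moves P u (S u)"
    have Su: "S u \<subseteq> P - {u}" using b(1) u by (auto simp: valid_profile_def)
    have S'P: "S' \<subseteq> P - {u}" by (rule moves_sub[OF Su S'])
    note dc = dev_cases[OF m u Su b(2) b(3)[OF u] S'P a0 Z]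
    show "cost P d Z \<alpha> S u \<le> cost P d Z \<alpha> (S(u := S')) u"
    proof (cases "Os P d u \<subseteq> S' \<and> dominating1 P d u S'")
      case False
      then have "cost P d Z \<alpha> S u < cost P d Z \<alpha> (S(u := S')) u" using dc by blast
      then show ?thesis by simp
    next
      case True
      have O0: "Os P d u \<subseteq> S u" using b(2) u by (auto simp: all1_def Os_def)
      have c1: "cost P d Z \<alpha> S u = card (P - {u})
       + (real (card (As P d u - Ms P d u)) + card (S u \<inter> As P d u \<inter> Ms P d u) - card (S u \<inter> As P d u)) / 2
       + \<alpha> * (real (card (Os P d u)) + card (S u \<inter> As P d u))"
        using cost_good[OF m u Su b(2) O0 b(3)[OF u], of Z \<alpha>] by simp
      have c2: "cost P d Z \<alpha> (S(u := S')) u = card (P - {u})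
       + (real (card (As P d u - Ms P d u)) + card (S' \<inter> As P d u \<inter> Ms P d u) - card (S' \<inter> As P d u)) / 2
       + \<alpha> * (real (card (Os P d u)) + card (S' \<inter> As P d u))"
        using cost_good[OF m u S'P b(2), of Z \<alpha>] True by simp
      have mm: "card (S u \<inter> As P d u \<inter> Ms P d u) \<le> card (S' \<inter> As P d u \<inter> Ms P d u)"
        using m_mono[OF m u D S'] True by simp
      define k where "k = real (card (S u \<inter> As P d u))"
      define k' where "k' = real (card (S' \<inter> As P d u))"
      have h: "0 \<le> (\<alpha> - 1/2) * (k' - k)"
      proof (cases "\<alpha> = 1/2")
        case True
        then have "\<alpha> - 1/2 = 0" by simp
        then show ?thesis by (metis mult_zero_left order_refl)
      next
        case False
        then have M: "MinDSG P d S" using K by simp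
        have "card (W2 d S u) \<le> card {v \<in> S'. d u v = 2}"
          using M u S'P True unfolding MinDSG_def Os_def by blast
        moreover have "{v \<in> S'. d u v = 2} = S' \<inter> As P d u" using S'P by (auto simp: As_def)
        ultimately have kk: "card (S u \<inter> As P d u) \<le> card (S' \<inter> As P d u)"
          using W2_eq[where S=S, OF Su] by simp
        then show ?thesis using a by (simp add: k_def k'_def)
      qed
      have e: "\<alpha> * (card (Os P d u) + k') - \<alpha> * (card (Os P d u) + k) = (\<alpha> - 1/2) * (k' - k) + (k' - k)/2"
        by (simp add: algebra_simps)
      have mmr: "real (card (S u \<inter> As P d u \<inter> Ms P d u)) \<le> real (card (S' \<inter> As P d u \<inter> Ms P d u))"
        using mm by simp
      show ?thesis unfolding c1 c2 k_def[symmetric] k'_def[symmetric] by (rule ineq3[OF h mmr])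
    qed
  qed
qed


lemma part3:
  fixes Z \<alpha> :: real
  assumes m: "one_two_metric P d" and a: "\<alpha> > 1/2" and Z: "Z \<ge> (2 + \<alpha>) * (card P + 1)"
    and M: "MinDSG P d S"
  shows "greedy_eq P d Z \<alpha> S"
  using GE_gen[OF m _ Z] a M by (simp add: MinDSG_def)

lemma ineq1:
  fixes a mm \<alpha> A k oo :: real
  assumes "0 \<le> a" "0 \<le> mm" "0 < \<alpha>" "\<alpha> < 1/2" "a + k = A + mm"
    and "(A + mm - k) / 2 + \<alpha> * (oo + k) \<le> \<alpha> * (oo + A)"
  shows "a = 0 \<and> mm = 0"
proof -
  have k: "k = A + mm - a" using assms(5) by simp
  have "(A + mm - k) / 2 + \<alpha> * (oo + k) = \<alpha> * (oo + A) + ((1/2 - \<alpha>) * a + \<alpha> * mm)"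
    unfolding k by (simp add: field_simps)
  then have le: "(1/2 - \<alpha>) * a + \<alpha> * mm \<le> 0" using assms(6) by simp
  have p1: "(1/2 - \<alpha>) * a \<ge> 0" using assms by simp
  have p2: "\<alpha> * mm \<ge> 0" using assms by simp
  have "(1/2 - \<alpha>) * a = 0" "\<alpha> * mm = 0" using le p1 p2 by linarith+
  then show ?thesis using assms(3,4) by simp
qed

lemma ineq1b:
  fixes a mm \<alpha> A k oo :: real
  assumes "0 \<le> a" "0 \<le> mm" "0 < \<alpha>" "\<alpha> < 1/2" "a + k = A + mm"
  shows "\<alpha> * (oo + A) \<le> (A + mm - k) / 2 + \<alpha> * (oo + k)"
proof -
  have k: "k = A + mm - a" using assms(5) by simp
  have "(A + mm - k) / 2 + \<alpha> * (oo + k) = \<alpha> * (oo + A) + ((1/2 - \<alpha>) * a + \<alpha> * mm)"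
    unfolding k by (simp add: field_simps)
  moreover have p1: "(1/2 - \<alpha>) * a \<ge> 0" using assms by simp
  moreover have p2: "\<alpha> * mm \<ge> 0" using assms by simp
  ultimately show ?thesis by linarith
qed

lemma ineq2:
  fixes \<alpha> c A mm mm' k k' oo :: real
  assumes "\<alpha> = 1/2" "mm' < mm"
  shows "c + (A + mm' - k') / 2 + \<alpha> * (oo + k') < c + (A + mm - k) / 2 + \<alpha> * (oo + k)"
  using assms(2) unfolding assms(1) by (simp add: field_simps)

lemma cost_self:
  fixes Z \<alpha> :: real
  assumes m: "one_two_metric P d" and u: "u \<in> P" and Su: "S u \<subseteq> P - {u}" and a1: "all1 P d S"
    and dom: "dominating1 P d u (S u)"
  shows "cost P d Z \<alpha> S u = card (P - {u})
     + (real (card (As P d u - Ms P d u)) + card (S u \<inter> As P d u \<inter> Ms P d u) - card (S u \<inter> As P d u)) / 2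
     + \<alpha> * (real (card (Os P d u)) + card (S u \<inter> As P d u))"
proof -
  have O0: "Os P d u \<subseteq> S u" using a1 u by (auto simp: all1_def Os_def)
  show ?thesis using cost_good[where S=S, OF m u Su a1 O0 dom, of Z \<alpha>] by simp
qed

lemma Nstar_cards:
  fixes d :: "'a \<Rightarrow> 'a \<Rightarrow> nat"
  shows "(Os P d u \<union> (As P d u - Ms P d u)) \<inter> As P d u \<inter> Ms P d u = {}"
    "(Os P d u \<union> (As P d u - Ms P d u)) \<inter> As P d u = As P d u - Ms P d u"
  by (auto simp: Os_def As_def)

lemma cost_star:
  fixes Z \<alpha> :: real
  assumes m: "one_two_metric P d" and u: "u \<in> P" and a1: "all1 P d S"
  shows "cost P d Z \<alpha> (S(u := Os P d u \<union> (As P d u - Ms P d u))) u = card (P - {u})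
     + (real (card (As P d u - Ms P d u)) + 0 - card (As P d u - Ms P d u)) / 2
     + \<alpha> * (real (card (Os P d u)) + card (As P d u - Ms P d u))"
proof -
  have "Os P d u \<subseteq> Os P d u \<union> (As P d u - Ms P d u)" by blast
  note X = cost_good[where S=S, OF m u Nstar(2)[OF m u] a1 this Nstar(3)[OF m u], of Z \<alpha>]
  have e: "(As P d u - Ms P d u) \<inter> Ms P d u = {}" by blast
  show ?thesis using X[unfolded Nstar_cards] by (simp add: e)
qed

lemma NE_GE:
  assumes "nash_eq P d Z \<alpha> S" shows "greedy_eq P d Z \<alpha> S"
proof -
  have v: "valid_profile P S" using assms by (simp add: nash_eq_def)
  show ?thesis unfolding greedy_eq_def
  proof (intro conjI ballI v)
    fix u S' assume u: "u \<in> P" and S': "S' \<in> greedy_moves P u (S u)"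
    have "S u \<subseteq> P - {u}" using v u by (auto simp: valid_profile_def)
    then have S'P: "S' \<subseteq> P - {u}" by (rule moves_sub[OF _ S'])
    have "\<forall>u\<in>P. \<forall>S'. S' \<subseteq> P - {u} \<longrightarrow> cost P d Z \<alpha> S u \<le> cost P d Z \<alpha> (S(u := S')) u"
      using assms unfolding nash_eq_def by blast
    then show "cost P d Z \<alpha> S u \<le> cost P d Z \<alpha> (S(u := S')) u" using u S'P by blast
  qed
qed

lemma GE_DSG:
  fixes Z \<alpha> :: real
  assumes m: "one_two_metric P d" and a: "\<alpha> = 1/2" and Z: "Z \<ge> (2 + \<alpha>) * (card P + 1)"
    and G: "greedy_eq P d Z \<alpha> S"
  shows "DSG P d S"
proof -
  have v: "valid_profile P S" using G by (simp add: greedy_eq_def)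
  have H: "\<And>u S'. u \<in> P \<Longrightarrow> S' \<in> greedy_moves P u (S u) \<Longrightarrow> cost P d Z \<alpha> S u \<le> cost P d Z \<alpha> (S(u := S')) u"
    using G by (simp add: greedy_eq_def)
  have Su: "\<And>u. u \<in> P \<Longrightarrow> S u \<subseteq> P - {u}" using v by (auto simp: valid_profile_def)
  have a0: "\<alpha> \<ge> 0" using a by simp
  have b: "badset P d S u = {}" if u: "u \<in> P" for u
  proof (rule bad0[where S=S, OF m u Su[OF u] a0 Z])
    fix w assume "w \<in> P - {u} - S u"
    then have "S u \<union> {w} \<in> greedy_moves P u (S u)" unfolding greedy_moves_def by blast
    then show "cost P d Z \<alpha> S u \<le> cost P d Z \<alpha> (S(u := S u \<union> {w})) u" using H u by blast
  qed
  note ag = all_good[OF m v b]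
  have domS: "\<And>u. u \<in> P \<Longrightarrow> dominating1 P d u (S u)" using ag(2) by blast
  have a1S: "all1 P d S" using ag(1) by blast
  show ?thesis unfolding DSG_def
  proof (intro conjI)
    show "valid_profile P S" by (rule v)
    show "\<forall>v\<in>P. \<forall>w\<in>P. v \<noteq> w \<longrightarrow> d v w = 1 \<longrightarrow> w \<in> S v" using a1S by (simp add: all1_def)
    show "\<forall>u\<in>P. dominating1 P d u (S u)" using domS by blast
    show "\<forall>u\<in>P. \<not> (\<exists>N'.
        (N' \<in> {S u - {x} | x. x \<in> S u} \<or>
         N' \<in> {(S u - {x}) \<union> {y} | x y. x \<in> S u \<and> y \<in> P - {u} - S u}) \<and>
        {v \<in> P. v \<noteq> u \<and> d u v = 1} \<subseteq> N' \<and>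
        dominating1 P d u N' \<and>
        card ({v \<in> N'. d u v = 2} \<inter> W11 P d S u) < card (W2plus P d S u))"
    proof
    fix u assume u: "u \<in> P"
    show "\<not> (\<exists>N'.
        (N' \<in> {S u - {x} | x. x \<in> S u} \<or>
         N' \<in> {(S u - {x}) \<union> {y} | x y. x \<in> S u \<and> y \<in> P - {u} - S u}) \<and>
        {v \<in> P. v \<noteq> u \<and> d u v = 1} \<subseteq> N' \<and>
        dominating1 P d u N' \<and>
        card ({v \<in> N'. d u v = 2} \<inter> W11 P d S u) < card (W2plus P d S u))"
    proof
      assume "\<exists>N'.
        (N' \<in> {S u - {x} | x. x \<in> S u} \<or>
         N' \<in> {(S u - {x}) \<union> {y} | x y. x \<in> S u \<and> y \<in> P - {u} - S u}) \<and>
        {v \<in> P. v \<noteq> u \<and> d u v = 1} \<subseteq> N' \<and>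
        dominating1 P d u N' \<and>
        card ({v \<in> N'. d u v = 2} \<inter> W11 P d S u) < card (W2plus P d S u)"
      then obtain N' where mv: "N' \<in> {S u - {x} | x. x \<in> S u} \<or>
         N' \<in> {(S u - {x}) \<union> {y} | x y. x \<in> S u \<and> y \<in> P - {u} - S u}"
        and O: "{v \<in> P. v \<noteq> u \<and> d u v = 1} \<subseteq> N'" and dN: "dominating1 P d u N'"
        and lt: "card ({v \<in> N'. d u v = 2} \<inter> W11 P d S u) < card (W2plus P d S u)" by blast
      have N'm: "N' \<in> greedy_moves P u (S u)" using mv unfolding greedy_moves_def by blast
      have N'P: "N' \<subseteq> P - {u}" by (rule moves_sub[OF Su[OF u] N'm])
      have O': "Os P d u \<subseteq> N'" using O by (simp add: Os_def)
      have lt': "real (card (N' \<inter> As P d u \<inter> Ms P d u)) < card (S u \<inter> As P d u \<inter> Ms P d u)"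
        using lt W11_int[OF m u a1S N'P] W2plus_eq[OF m u a1S Su[OF u]] by simp
      note c2 = cost_good[where S=S, OF m u N'P a1S O' dN, of Z \<alpha>]
      note c1 = cost_self[where S=S, OF m u Su[OF u] a1S domS[OF u], of Z \<alpha>]
      have "cost P d Z \<alpha> (S(u := N')) u < cost P d Z \<alpha> S u"
        unfolding c1 c2 by (rule ineq2[OF a lt'])
      then show False using H[OF u N'm] by simp
    qed
    qed
  qed
qed

lemma NE_half_fwd:
  fixes Z \<alpha> :: real
  assumes m: "one_two_metric P d" and a: "\<alpha> = 1/2" and Z: "Z \<ge> (2 + \<alpha>) * (card P + 1)"
    and N: "nash_eq P d Z \<alpha> S"
  shows "DSG P d S \<and> (\<forall>u\<in>P. W2plus P d S u = {})"
proof -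
  have D: "DSG P d S" by (rule GE_DSG[OF m a Z NE_GE[OF N]])
  note b = DSG_basic[OF D]
  have NE: "\<And>u S'. u \<in> P \<Longrightarrow> S' \<subseteq> P - {u} \<Longrightarrow> cost P d Z \<alpha> S u \<le> cost P d Z \<alpha> (S(u := S')) u"
    using N by (simp add: nash_eq_def)
  have "W2plus P d S u = {}" if u: "u \<in> P" for u
  proof (rule ccontr)
    assume ne: "W2plus P d S u \<noteq> {}"
    have Su: "S u \<subseteq> P - {u}" using b(1) u by (auto simp: valid_profile_def)
    have fA: "finite (As P d u)" using fin[OF m] by (auto simp: As_def)
    have "S u \<inter> As P d u \<inter> Ms P d u \<noteq> {}" using ne W2plus_eq[OF m u b(2) Su] by simp
    then have "card (S u \<inter> As P d u \<inter> Ms P d u) > 0" using fA by (simp add: card_gt_0_iff)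
    then have lt': "(0::real) < real (card (S u \<inter> As P d u \<inter> Ms P d u))" by simp
    note c1 = cost_self[where S=S, OF m u Su b(2) b(3)[OF u], of Z \<alpha>]
    note c2 = cost_star[where S=S, OF m u b(2), of Z \<alpha>]
    have "cost P d Z \<alpha> (S(u := Os P d u \<union> (As P d u - Ms P d u))) u < cost P d Z \<alpha> S u"
      unfolding c1 c2 by (rule ineq2[OF a lt'])
    then show False using NE[OF u Nstar(2)[OF m u]] by simp
  qed
  then show ?thesis using D by blast
qed

lemma NE_half_bwd:
  fixes Z \<alpha> :: real
  assumes m: "one_two_metric P d" and a: "\<alpha> = 1/2" and Z: "Z \<ge> (2 + \<alpha>) * (card P + 1)"
    and D: "DSG P d S" and W: "\<forall>u\<in>P. W2plus P d S u = {}"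
  shows "nash_eq P d Z \<alpha> S"
proof -
  note b = DSG_basic[OF D]
  have a0: "\<alpha> \<ge> 0" using a by simp
  show ?thesis unfolding nash_eq_def
  proof (intro conjI ballI allI impI b(1))
    fix u S' assume u: "u \<in> P" and S'P: "S' \<subseteq> P - {u}"
    have Su: "S u \<subseteq> P - {u}" using b(1) u by (auto simp: valid_profile_def)
    note dc = dev_cases[OF m u Su b(2) b(3)[OF u] S'P a0 Z]
    show "cost P d Z \<alpha> S u \<le> cost P d Z \<alpha> (S(u := S')) u"
    proof (cases "Os P d u \<subseteq> S' \<and> dominating1 P d u S'")
      case False
      then have "cost P d Z \<alpha> S u < cost P d Z \<alpha> (S(u := S')) u" using dc by blast
      then show ?thesis by simp
    next
      case True
      note c1 = cost_self[where S=S, OF m u Su b(2) b(3)[OF u], of Z \<alpha>]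
      note c2 = cost_good[where S=S, OF m u S'P b(2), of Z \<alpha>]
      have "S u \<inter> As P d u \<inter> Ms P d u = {}" using W u W2plus_eq[OF m u b(2) Su] by simp
      then have mm: "real (card (S u \<inter> As P d u \<inter> Ms P d u)) \<le> real (card (S' \<inter> As P d u \<inter> Ms P d u))"
        by simp
      have "\<alpha> - 1/2 = 0" using a by simp
      then have h: "0 \<le> (\<alpha> - 1/2) * (real (card (S' \<inter> As P d u)) - real (card (S u \<inter> As P d u)))"
        by (metis mult_zero_left order_refl)
      show ?thesis unfolding c1 c2[OF conjunct1[OF True] conjunct2[OF True]] by (rule ineq3[OF h mm])
    qed
  qed
qed

lemma part1_fwd:
  fixes Z \<alpha> :: real
  assumes m: "one_two_metric P d" and a0: "0 < \<alpha>" and a: "\<alpha> < 1/2" and Z: "Z \<ge> (2 + \<alpha>) * (card P + 1)"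
    and N: "nash_eq P d Z \<alpha> S"
  shows "valid_profile P S \<and> (\<forall>u\<in>P. S u = MaxDSG P d u)"
proof -
  have v: "valid_profile P S" using N by (simp add: nash_eq_def)
  have NE: "\<And>u S'. u \<in> P \<Longrightarrow> S' \<subseteq> P - {u} \<Longrightarrow> cost P d Z \<alpha> S u \<le> cost P d Z \<alpha> (S(u := S')) u"
    using N by (simp add: nash_eq_def)
  have Su: "\<And>u. u \<in> P \<Longrightarrow> S u \<subseteq> P - {u}" using v by (auto simp: valid_profile_def)
  have a00: "\<alpha> \<ge> 0" using a0 by simp
  have b: "badset P d S u = {}" if u: "u \<in> P" for u
  proof (rule bad0[where S=S, OF m u Su[OF u] a00 Z])
    fix w assume "w \<in> P - {u} - S u"
    then have "S u \<union> {w} \<subseteq> P - {u}" using Su[OF u] by auto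
    then show "cost P d Z \<alpha> S u \<le> cost P d Z \<alpha> (S(u := S u \<union> {w})) u" using NE u by blast
  qed
  note ag = all_good[OF m v b]
  have domS: "\<And>u. u \<in> P \<Longrightarrow> dominating1 P d u (S u)" using ag(2) by blast
  have a1S: "all1 P d S" using ag(1) by blast
  have "S u = MaxDSG P d u" if u: "u \<in> P" for u
  proof -
    note c1 = cost_self[where S=S, OF m u Su[OF u] a1S domS[OF u], of Z \<alpha>]
    note c2 = cost_star[where S=S, OF m u a1S, of Z \<alpha>]
    have le0: "cost P d Z \<alpha> S u \<le> cost P d Z \<alpha> (S(u := Os P d u \<union> (As P d u - Ms P d u))) u"
      by (rule NE[OF u Nstar(2)[OF m u]])
    define A where "A = real (card (As P d u - Ms P d u))"
    define mm where "mm = real (card (S u \<inter> As P d u \<inter> Ms P d u))"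
    define k where "k = real (card (S u \<inter> As P d u))"
    define oo where "oo = real (card (Os P d u))"
    define aa where "aa = real (card (As P d u - S u - Ms P d u))"
    have le: "(A + mm - k) / 2 + \<alpha> * (oo + k) \<le> \<alpha> * (oo + A)"
      using le0 unfolding c1 c2 A_def[symmetric] mm_def[symmetric] k_def[symmetric] oo_def[symmetric] by simp
    have O0: "Os P d u \<subseteq> S u" using a1S u by (auto simp: all1_def Os_def)
    have eq: "aa + k = A + mm" unfolding aa_def k_def A_def mm_def
      using card_ids(1)[OF m u Su[OF u] O0] by (metis of_nat_add)
    have z: "aa = 0 \<and> mm = 0" by (rule ineq1[OF _ _ a0 a eq le]) (simp_all add: aa_def mm_def)
    have fA: "finite (As P d u)" using fin[OF m] by (auto simp: As_def)
    have e1: "As P d u - S u - Ms P d u = {}" using z fA unfolding aa_def by simp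
    have e2: "S u \<inter> As P d u \<inter> Ms P d u = {}" using z fA unfolding mm_def by simp
    have "S u = Os P d u \<union> (As P d u - Ms P d u)"
    proof
      show "S u \<subseteq> Os P d u \<union> (As P d u - Ms P d u)"
      proof
        fix x assume x: "x \<in> S u"
        then have "x \<in> P" "x \<noteq> u" using Su[OF u] by auto
        then have "d u x = 1 \<or> d u x = 2" using d12[OF m u] by blast
        then show "x \<in> Os P d u \<union> (As P d u - Ms P d u)"
          using x e2 \<open>x \<in> P\<close> \<open>x \<noteq> u\<close> by (auto simp: Os_def As_def)
      qed
      show "Os P d u \<union> (As P d u - Ms P d u) \<subseteq> S u" using O0 e1 by blast
    qed
    then show ?thesis using Nstar(1)[OF m u] by simp
  qed
  then show ?thesis using v by blast
qed

lemma part1_bwd: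
  fixes Z \<alpha> :: real
  assumes m: "one_two_metric P d" and a0: "0 < \<alpha>" and a: "\<alpha> < 1/2" and Z: "Z \<ge> (2 + \<alpha>) * (card P + 1)"
    and v: "valid_profile P S" and E: "\<forall>u\<in>P. S u = MaxDSG P d u"
  shows "nash_eq P d Z \<alpha> S"
proof -
  have Su: "\<And>u. u \<in> P \<Longrightarrow> S u \<subseteq> P - {u}" using v by (auto simp: valid_profile_def)
  have ES: "\<And>u. u \<in> P \<Longrightarrow> S u = Os P d u \<union> (As P d u - Ms P d u)" using E Nstar(1)[OF m] by simp
  have a1S: "all1 P d S" unfolding all1_def
  proof (intro ballI impI)
    fix x w assume "x \<in> P" "w \<in> P" "x \<noteq> w" "d x w = 1"
    then show "w \<in> S x" using ES[of x] by (auto simp: Os_def)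
  qed
  have domS: "\<And>u. u \<in> P \<Longrightarrow> dominating1 P d u (S u)" using ES Nstar(3)[OF m] by simp
  have a00: "\<alpha> \<ge> 0" using a0 by simp
  show ?thesis unfolding nash_eq_def
  proof (intro conjI ballI allI impI v)
    fix u S' assume u: "u \<in> P" and S'P: "S' \<subseteq> P - {u}"
    note dc = dev_cases[OF m u Su[OF u] a1S domS[OF u] S'P a00 Z]
    show "cost P d Z \<alpha> S u \<le> cost P d Z \<alpha> (S(u := S')) u"
    proof (cases "Os P d u \<subseteq> S' \<and> dominating1 P d u S'")
      case False
      then have "cost P d Z \<alpha> S u < cost P d Z \<alpha> (S(u := S')) u" using dc by blast
      then show ?thesis by simp
    next
      case True
      have SS: "S(u := Os P d u \<union> (As P d u - Ms P d u)) = S" by (rule fun_upd_idem[where f=S, OF ES[OF u]])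
      note c1 = cost_star[where S=S, OF m u a1S, of Z \<alpha>, unfolded SS]
      note c2 = cost_good[where S=S, OF m u S'P a1S conjunct1[OF True] conjunct2[OF True], of Z \<alpha>]
      define A where "A = real (card (As P d u - Ms P d u))"
      define mm where "mm = real (card (S' \<inter> As P d u \<inter> Ms P d u))"
      define k where "k = real (card (S' \<inter> As P d u))"
      define oo where "oo = real (card (Os P d u))"
      define aa where "aa = real (card (As P d u - S' - Ms P d u))"
      have "aa + k = A + mm" unfolding aa_def k_def A_def mm_def
        using card_ids(1)[OF m u S'P conjunct1[OF True]] by (metis of_nat_add)
      then have "\<alpha> * (oo + A) \<le> (A + mm - k) / 2 + \<alpha> * (oo + k)"
        by (intro ineq1b[OF _ _ a0 a]) (auto simp: aa_def mm_def)
      then show ?thesis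
        unfolding c1 c2 A_def[symmetric] mm_def[symmetric] k_def[symmetric] oo_def[symmetric] by simp
    qed
  qed
qed

theorem theorem2p8:
  fixes P :: "'a set" and d :: "'a \<Rightarrow> 'a \<Rightarrow> nat" and \<alpha> :: real
  assumes "one_two_metric P d" and "\<alpha> > 0"
  shows "\<exists>Z0::real. \<forall>Z\<ge>Z0.
    (\<alpha> < 1/2 \<longrightarrow> (\<forall>S. nash_eq P d Z \<alpha> S \<longleftrightarrow> valid_profile P S \<and> (\<forall>u\<in>P. S u = MaxDSG P d u))) \<and>
    (\<alpha> = 1/2 \<longrightarrow>
       (\<forall>S. greedy_eq P d Z \<alpha> S \<longleftrightarrow> DSG P d S) \<and>
       (\<forall>S. nash_eq P d Z \<alpha> S \<longleftrightarrow> DSG P d S \<and> (\<forall>u\<in>P. W2plus P d S u = {}))) \<and>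
    (\<alpha> > 1/2 \<longrightarrow> (\<forall>S. MinDSG P d S \<longrightarrow> greedy_eq P d Z \<alpha> S))"
proof (rule exI[where x="(2 + \<alpha>) * (card P + 1)"], intro allI impI)
  note m = assms(1) and a0 = assms(2)
  fix Z :: real assume Z: "Z \<ge> (2 + \<alpha>) * (card P + 1)"
  have p1: "\<alpha> < 1/2 \<longrightarrow> (\<forall>S. nash_eq P d Z \<alpha> S \<longleftrightarrow> valid_profile P S \<and> (\<forall>u\<in>P. S u = MaxDSG P d u))"
  proof
    assume a: "\<alpha> < 1/2"
    show "\<forall>S. nash_eq P d Z \<alpha> S \<longleftrightarrow> valid_profile P S \<and> (\<forall>u\<in>P. S u = MaxDSG P d u)"
      using part1_fwd[OF m a0 a Z] part1_bwd[OF m a0 a Z] by blast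
  qed
  have p2: "\<alpha> = 1/2 \<longrightarrow>
       (\<forall>S. greedy_eq P d Z \<alpha> S \<longleftrightarrow> DSG P d S) \<and>
       (\<forall>S. nash_eq P d Z \<alpha> S \<longleftrightarrow> DSG P d S \<and> (\<forall>u\<in>P. W2plus P d S u = {}))"
  proof
    assume a: "\<alpha> = 1/2"
    have "\<forall>S. greedy_eq P d Z \<alpha> S \<longleftrightarrow> DSG P d S"
    proof (intro allI iffI)
      fix S assume "greedy_eq P d Z \<alpha> S" then show "DSG P d S" by (rule GE_DSG[OF m a Z])
    next
      fix S assume D: "DSG P d S"
      have "\<alpha> \<ge> 1/2" using a by simp
      then show "greedy_eq P d Z \<alpha> S" using GE_gen[OF m _ Z D] a by blast
    qed
    moreover have "\<forall>S. nash_eq P d Z \<alpha> S \<longleftrightarrow> DSG P d S \<and> (\<forall>u\<in>P. W2plus P d S u = {})"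
      using NE_half_fwd[OF m a Z] NE_half_bwd[OF m a Z] by blast
    ultimately show "(\<forall>S. greedy_eq P d Z \<alpha> S \<longleftrightarrow> DSG P d S) \<and>
       (\<forall>S. nash_eq P d Z \<alpha> S \<longleftrightarrow> DSG P d S \<and> (\<forall>u\<in>P. W2plus P d S u = {}))" by blast
  qed
  have p3: "\<alpha> > 1/2 \<longrightarrow> (\<forall>S. MinDSG P d S \<longrightarrow> greedy_eq P d Z \<alpha> S)"
    using part3[OF m _ Z] by blast
  show "(\<alpha> < 1/2 \<longrightarrow> (\<forall>S. nash_eq P d Z \<alpha> S \<longleftrightarrow> valid_profile P S \<and> (\<forall>u\<in>P. S u = MaxDSG P d u))) \<and>
    (\<alpha> = 1/2 \<longrightarrow>
       (\<forall>S. greedy_eq P d Z \<alpha> S \<longleftrightarrow> DSG P d S) \<and>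
       (\<forall>S. nash_eq P d Z \<alpha> S \<longleftrightarrow> DSG P d S \<and> (\<forall>u\<in>P. W2plus P d S u = {}))) \<and>
    (\<alpha> > 1/2 \<longrightarrow> (\<forall>S. MinDSG P d S \<longrightarrow> greedy_eq P d Z \<alpha> S))"
    using p1 p2 p3 by blast
qed

end
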